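(* For $n\ge1$ let $U_n(z)$ be the $n\times n$ matrix with entries $[U_n(z)]_{i,j}=z^{|i-j|}$, and let $\phi_n(x,z)=\det[U_n(z)-xI]$, with $\phi_0(x,z)=1$. Then $\phi_1(x,z)=1-x$ and for $n\ge2$ $$\phi_n(x,z)=\big(1-x-z^2(1+x)\big)\phi_{n-1}(x,z)-x^2z^2\phi_{n-2}(x,z).$$ *)

theory Defs
  imports "Jordan_Normal_Form.Determinant"
begin

definition U_mat :: "nat \<Rightarrow> 'a::comm_ring_1 \<Rightarrow> 'a mat" where
  "U_mat n z = mat n n (\<lambda>(i, j). z ^ nat \<bar>int i - int j\<bar>)"

definition phi :: "nat \<Rightarrow> 'a::comm_ring_1 \<Rightarrow> 'a \<Rightarrow> 'a" where
  "phi n x z = (if n = 0 then 1 else det (U_mat n z - x \<cdot>\<^sub>m 1\<^sub>m n))"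

end

theory Submission
  imports Defs
begin

definition Am :: "nat \<Rightarrow> 'a::comm_ring_1 \<Rightarrow> 'a \<Rightarrow> 'a mat" where
  "Am n x z = mat n n (\<lambda>(i, j). z ^ nat \<bar>int i - int j\<bar> - (if i = j then x else 0))"

lemma Am_carrier[simp]: "Am n x z \<in> carrier_mat n n"
  by (simp add: Am_def)

lemma Am_dims[simp]: "dim_row (Am n x z) = n" "dim_col (Am n x z) = n"
  by (simp_all add: Am_def)

lemma Am_idx[simp]: "i < n \<Longrightarrow> j < n \<Longrightarrow>
   Am n x z $$ (i,j) = z ^ nat \<bar>int i - int j\<bar> - (if i = j then x else 0)"
  by (simp add: Am_def)

lemma phi_Am: "phi n x z = det (Am n x z)"
proof (cases "n = 0")
  case True
  then show ?thesis by (simp add: phi_def)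
next
  case False
  have "U_mat n z - x \<cdot>\<^sub>m 1\<^sub>m n = Am n x z"
    by (rule eq_matI) (auto simp: U_mat_def Am_def)
  then show ?thesis using False by (simp add: phi_def)
qed

definition Dm :: "nat \<Rightarrow> 'a::comm_ring_1 \<Rightarrow> 'a \<Rightarrow> 'a mat" where
  "Dm n x z = mat n n (\<lambda>(i, j).
     if i = 0 \<and> j = 0 then 1 - x - z^2 - x * z^2
     else if i = 0 then (if j = 1 then z * x else 0)
     else if j = 0 then (if i = 1 then z * x else 0)
     else Am n x z $$ (i,j))"

lemma pow_pred: "0 < j \<Longrightarrow> (z::'a::comm_ring_1) ^ j = z * z ^ (j - 1)"
  by (cases j) auto

lemma Dm_eq: assumes n: "2 \<le> n"
  shows "Dm n x z = addrow (-z) 0 1 (addcol (-z) 0 1 (Am n x z))"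
proof (rule eq_matI)
  fix i j assume i: "i < dim_row (addrow (-z) 0 1 (addcol (-z) 0 1 (Am n x z)))"
    and j: "j < dim_col (addrow (-z) 0 1 (addcol (-z) 0 1 (Am n x z)))"
  then have i: "i < n" and j: "j < n" by (auto simp: mat_addrow_def)
  have n1: "1 < n" using n by simp
  have e: "Dm n x z $$ (i, j) = (if i = 0 \<and> j = 0 then 1 - x - z^2 - x * z^2
     else if i = 0 then (if j = 1 then z * x else 0)
     else if j = 0 then (if i = 1 then z * x else 0)
     else Am n x z $$ (i,j))" using i j by (simp add: Dm_def)
  consider "i = 0" | "i = 1" | "2 \<le> i" by linarith
  moreover consider "j = 0" | "j = 1" | "2 \<le> j" by linarith
  ultimately show "Dm n x z $$ (i, j) = addrow (-z) 0 1 (addcol (-z) 0 1 (Am n x z)) $$ (i, j)"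
    unfolding e using i j n1
    by cases (auto simp: power2_eq_square algebra_simps nat_diff_distrib' pow_pred[of j z] pow_pred[of i z])
qed (auto simp: mat_addrow_def Dm_def)

lemma Dm_idx[simp]: "i < n \<Longrightarrow> j < n \<Longrightarrow> Dm n x z $$ (i, j) = (if i = 0 \<and> j = 0 then 1 - x - z^2 - x * z^2
     else if i = 0 then (if j = 1 then z * x else 0)
     else if j = 0 then (if i = 1 then z * x else 0)
     else Am n x z $$ (i,j))" by (simp add: Dm_def)

lemma Dm_dims[simp]: "dim_row (Dm n x z) = n" "dim_col (Dm n x z) = n" by (simp_all add: Dm_def)

lemma Dm_carrier[simp]: "Dm n x z \<in> carrier_mat n n" by (simp add: Dm_def)

lemma rec_step: "det (Am (Suc (Suc m)) x z) =
   (1 - x - z^2 * (1 + x)) * det (Am (Suc m) x z) - x^2 * z^2 * det (Am m x z)"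
proof -
  let ?n = "Suc (Suc m)"
  let ?A = "Am ?n x z"
  let ?D = "Dm ?n x z"
  have cA: "addcol (-z) 0 1 ?A \<in> carrier_mat ?n ?n" by (simp add: mat_addcol_def)
  have "det ?D = det (addrow (-z) 0 1 (addcol (-z) 0 1 ?A))" by (simp add: Dm_eq)
  also have "\<dots> = det (addcol (-z) 0 1 ?A)" by (rule det_addrow[OF _ _ cA]) auto
  also have "\<dots> = det ?A" by (rule det_addcol[where n="Suc (Suc m)"]) auto
  finally have dD: "det ?A = det ?D" by simp
  have "det ?D = (\<Sum>j<?n. ?D $$ (0,j) * cofactor ?D 0 j)"
    by (rule laplace_expansion_row) auto
  also have "\<dots> = ?D $$ (0,0) * cofactor ?D 0 0 + ?D $$ (0,1) * cofactor ?D 0 1"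
    by (subst sum.lessThan_Suc_shift, subst sum.lessThan_Suc_shift, simp del: Dm_idx, simp)
  finally have d1: "det ?D = (1 - x - z^2 - x * z^2) * det (mat_delete ?D 0 0) - z * x * det (mat_delete ?D 0 1)"
    by (simp add: cofactor_def)
  have m00: "mat_delete ?D 0 0 = Am (Suc m) x z"
    by (rule eq_matI) (auto simp: mat_delete_def)
  let ?E = "mat_delete ?D 0 1"
  have cE: "?E \<in> carrier_mat (Suc m) (Suc m)" by (simp add: mat_delete_def)
  have "det ?E = (\<Sum>i<Suc m. ?E $$ (i,0) * cofactor ?E i 0)"
    by (rule laplace_expansion_column[OF cE]) auto
  also have "\<dots> = ?E $$ (0,0) * cofactor ?E 0 0"
    by (subst sum.lessThan_Suc_shift, simp del: Dm_idx, simp add: mat_delete_def)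
  finally have d2: "det ?E = z * x * det (mat_delete ?E 0 0)"
    by (simp add: cofactor_def mat_delete_def)
  have m2: "mat_delete ?E 0 0 = Am m x z"
    by (rule eq_matI) (auto simp: mat_delete_def)
  show ?thesis unfolding dD d1 m00 d2 m2
    by (simp add: power2_eq_square algebra_simps)
qed

theorem lemma4p1:
  fixes x z :: "'a::comm_ring_1"
  shows "phi 1 x z = 1 - x \<and>
    (\<forall>n\<ge>2. phi n x z = (1 - x - z^2 * (1 + x)) * phi (n - 1) x z - x^2 * z^2 * phi (n - 2) x z)"
proof
  show "phi 1 x z = 1 - x" unfolding phi_Am
    by (simp add: det_def Am_def)
  show "\<forall>n\<ge>2. phi n x z = (1 - x - z^2 * (1 + x)) * phi (n - 1) x z - x^2 * z^2 * phi (n - 2) x z"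
  proof (intro allI impI)
    fix n :: nat assume "2 \<le> n"
    then obtain m where "n = Suc (Suc m)" by (metis add_2_eq_Suc le_Suc_ex)
    then show "phi n x z = (1 - x - z^2 * (1 + x)) * phi (n - 1) x z - x^2 * z^2 * phi (n - 2) x z"
      unfolding phi_Am using rec_step by simp
  qed
qed

end
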